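(* Let $\mathcal{C}$ be a permutation class (resp. a polyomino class) and let $\mathcal{M}$ be its canonical $m$-basis. Then $\mathcal{C}=Av_{\mathfrak{S}}(\mathcal{M})$ (resp. $\mathcal{C}=Av_{\mathfrak{P}}(\mathcal{M})$).
   Context: Binary matrices are matrices with entries in $\{0,1\}$; $M'\preccurlyeq M$ (submatrix order) means $M'$ is obtained from $M$ by deleting some rows and/or columns. A permutation $\sigma$ of $\{1,\dots,n\}$ is identified with its permutation matrix $M_\sigma$, where $M_\sigma(i,j)=1$ iff $i=\sigma(j)$ (rows numbered bottom to top); a permutation class is a set of permutations closed under taking patterns (equivalently, closed under taking submatrices that are permutation matrices). A quasi-permutation matrix is a binary matrix with at most one $1$ in each row and each column. A polyomino is a finite edge-connected union of unit cells of $\mathbb{Z}^2$ up to translation, identified with the binary matrix of its minimal bounding rectangle (entry $(i,j)$ equal to $1$ iff the unit square $[j-1,j]\times[i-1,i]$ is a cell, the polyomino placed in the positive quarter plane touching both axes); a polyomino class is a set of polyominoes closed under taking submatrices that are polyominoes. For a set $\mathcal{M}$ of matrices, $Av_{\mathfrak{S}}(\mathcal{M})$ (resp. $Av_{\mathfrak{P}}(\mathcal{M})$) is the set of permutations (resp. polyominoes) with no submatrix in $\mathcal{M}$. For a class $\mathcal{C}$, let $\mathcal{C}^+$ be the set of binary matrices that are submatrices of some element of $\mathcal{C}$. The canonical $m$-basis of a permutation class (resp. polyomino class) $\mathcal{C}$ is the set of quasi-permutation matrices (resp. binary matrices) not in $\mathcal{C}^+$ that are minimal for $\preccurlyeq$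 among quasi-permutation matrices (resp. binary matrices) not in $\mathcal{C}^+$. *)

theory Defs
  imports "HOL-Combinatorics.Permutations"
begin

text \<open>A binary matrix is a triple (number of rows m, number of columns n, entries),
rows and columns indexed from 0; an entry is True iff it is 1.
Well-formed matrices have all 1-entries inside the m x n rectangle, so that
equality of triples is equality of matrices.\<close>

type_synonym bmat = "nat \<times> nat \<times> (nat \<Rightarrow> nat \<Rightarrow> bool)"

definition rows :: "bmat \<Rightarrow> nat" where "rows M = fst M"
definition cols :: "bmat \<Rightarrow> nat" where "cols M = fst (snd M)"
definition ent :: "bmat \<Rightarrow> nat \<Rightarrow> nat \<Rightarrow> bool" where "ent M = snd (snd M)"

definition wf_mat :: "bmat \<Rightarrow> bool" where
  "wf_mat M \<longleftrightarrow> (\<forall>i j. ent M i j \<longrightarrow> i < rows M \<and> j < cols M)"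

definition submat :: "bmat \<Rightarrow> bmat \<Rightarrow> bool" (infix "\<preceq>\<^sub>m" 50) where
  "M' \<preceq>\<^sub>m M \<longleftrightarrow> wf_mat M' \<and> wf_mat M \<and>
     (\<exists>r c. strict_mono_on {..<rows M'} r \<and> (\<forall>i<rows M'. r i < rows M) \<and>
            strict_mono_on {..<cols M'} c \<and> (\<forall>j<cols M'. c j < cols M) \<and>
            (\<forall>i<rows M'. \<forall>j<cols M'. ent M' i j = ent M (r i) (c j)))"

definition perm_mat :: "nat \<Rightarrow> (nat \<Rightarrow> nat) \<Rightarrow> bmat" where
  "perm_mat n \<sigma> = (n, n, \<lambda>i j. i < n \<and> j < n \<and> i = \<sigma> j)"

definition is_perm_mat :: "bmat \<Rightarrow> bool" where
  "is_perm_mat M \<longleftrightarrow> (\<exists>n \<sigma>. \<sigma> permutes {..<n} \<and> M = perm_mat n \<sigma>)"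

definition quasi_perm_mat :: "bmat \<Rightarrow> bool" where
  "quasi_perm_mat M \<longleftrightarrow> wf_mat M \<and>
     (\<forall>i j j'. ent M i j \<and> ent M i j' \<longrightarrow> j = j') \<and>
     (\<forall>i i' j. ent M i j \<and> ent M i' j \<longrightarrow> i = i')"

text \<open>Polyominoes: nonempty, edge-connected set of cells filling its minimal bounding
rectangle (every row and every column contains a cell).\<close>
definition cells :: "bmat \<Rightarrow> (nat \<times> nat) set" where
  "cells M = {(i, j). ent M i j}"

definition cell_adj :: "(nat \<times> nat) set \<Rightarrow> ((nat \<times> nat) \<times> (nat \<times> nat)) set" where
  "cell_adj S = {((i, j), (i', j')). (i, j) \<in> S \<and> (i', j') \<in> S \<and>
       ((i = i' \<and> (j' = j + 1 \<or> j = j' + 1)) \<or> (j = j' \<and> (i' = i + 1 \<or> i = i' + 1)))}"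

definition is_polyomino :: "bmat \<Rightarrow> bool" where
  "is_polyomino M \<longleftrightarrow> wf_mat M \<and> cells M \<noteq> {} \<and>
     (\<forall>a\<in>cells M. \<forall>b\<in>cells M. (a, b) \<in> (cell_adj (cells M))\<^sup>*) \<and>
     (\<forall>i<rows M. \<exists>j. ent M i j) \<and> (\<forall>j<cols M. \<exists>i. ent M i j)"

definition perm_class :: "bmat set \<Rightarrow> bool" where
  "perm_class C \<longleftrightarrow> (\<forall>M\<in>C. is_perm_mat M) \<and>
     (\<forall>M\<in>C. \<forall>M'. is_perm_mat M' \<and> M' \<preceq>\<^sub>m M \<longrightarrow> M' \<in> C)"

definition poly_class :: "bmat set \<Rightarrow> bool" where
  "poly_class C \<longleftrightarrow> (\<forall>M\<in>C. is_polyomino M) \<and>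
     (\<forall>M\<in>C. \<forall>M'. is_polyomino M' \<and> M' \<preceq>\<^sub>m M \<longrightarrow> M' \<in> C)"

definition closure_plus :: "bmat set \<Rightarrow> bmat set" where
  "closure_plus C = {M. wf_mat M \<and> (\<exists>P\<in>C. M \<preceq>\<^sub>m P)}"

definition perm_mbasis :: "bmat set \<Rightarrow> bmat set" where
  "perm_mbasis C = {M. quasi_perm_mat M \<and> M \<notin> closure_plus C \<and>
     (\<forall>M'. quasi_perm_mat M' \<and> M' \<notin> closure_plus C \<and> M' \<preceq>\<^sub>m M \<longrightarrow> M' = M)}"

definition poly_mbasis :: "bmat set \<Rightarrow> bmat set" where
  "poly_mbasis C = {M. wf_mat M \<and> M \<notin> closure_plus C \<and>
     (\<forall>M'. wf_mat M' \<and> M' \<notin> closure_plus C \<and> M' \<preceq>\<^sub>m M \<longrightarrow> M' = M)}"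

definition Av_S :: "bmat set \<Rightarrow> bmat set" where
  "Av_S \<M> = {P. is_perm_mat P \<and> \<not> (\<exists>M\<in>\<M>. M \<preceq>\<^sub>m P)}"

definition Av_P :: "bmat set \<Rightarrow> bmat set" where
  "Av_P \<M> = {P. is_polyomino P \<and> \<not> (\<exists>M\<in>\<M>. M \<preceq>\<^sub>m P)}"

end

theory Submission
  imports Defs
begin

lemma sm_ge: "strict_mono_on {..<n} (r::nat\<Rightarrow>nat) \<Longrightarrow> i < n \<Longrightarrow> i \<le> r i"
proof (induction i)
  case 0 then show ?case by simp
next
  case (Suc i)
  have "r i < r (Suc i)" using Suc.prems strict_mono_onD[of "{..<n}" r i "Suc i"] by auto
  with Suc show ?case by simp
qed

lemma sm_add: "strict_mono_on {..<n} (r::nat\<Rightarrow>nat) \<Longrightarrow> i + k < n \<Longrightarrow> r i + k \<le> r (i + k)"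
proof (induction k)
  case 0 then show ?case by simp
next
  case (Suc k)
  have "r (i+k) < r (Suc (i+k))" using Suc.prems strict_mono_onD[of "{..<n}" r "i+k" "Suc (i+k)"] by auto
  with Suc show ?case by simp
qed

lemma sm_id: assumes "strict_mono_on {..<n} (r::nat\<Rightarrow>nat)" "\<forall>i<n. r i < n" "i < n"
  shows "r i = i"
proof -
  have "r i + (n - 1 - i) \<le> r (i + (n - 1 - i))" using assms sm_add[of n r i "n - 1 - i"] by auto
  moreover have "i + (n - 1 - i) = n - 1" using assms by simp
  moreover have "r (n - 1) < n" using assms by auto
  ultimately have "r i \<le> i" by simp
  with sm_ge[OF assms(1,3)] show ?thesis by simp
qed

lemma sm_le: assumes "strict_mono_on {..<k} (r::nat\<Rightarrow>nat)" "\<forall>i<k. r i < n"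
  shows "k \<le> n"
proof (cases k)
  case 0 then show ?thesis by simp
next
  case (Suc m)
  have "m \<le> r m" using sm_ge[OF assms(1)] Suc by simp
  moreover have "r m < n" using assms Suc by simp
  ultimately show ?thesis using Suc by simp
qed

lemma submat_size: "M' \<preceq>\<^sub>m M \<Longrightarrow> rows M' \<le> rows M \<and> cols M' \<le> cols M"
  unfolding submat_def using sm_le by blast

lemma mat_eqI: assumes "wf_mat A" "wf_mat B" "rows A = rows B" "cols A = cols B"
  "\<forall>i<rows A. \<forall>j<cols A. ent A i j = ent B i j" shows "A = B"
proof -
  have e: "ent A = ent B"
  proof (intro ext)
    fix i j show "ent A i j = ent B i j"
    proof (cases "i < rows A \<and> j < cols A")
      case True then show ?thesis using assms(5) by blast
    next
      case False
      then have "\<not> ent A i j" using assms(1) unfolding wf_mat_def by blast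
      moreover have "\<not> ent B i j" using False assms(2,3,4) unfolding wf_mat_def by auto
      ultimately show ?thesis by blast
    qed
  qed
  obtain a1 a2 a3 where A: "A = (a1, a2, a3)" by (cases A) auto
  obtain b1 b2 b3 where B: "B = (b1, b2, b3)" by (cases B) auto
  show ?thesis using e assms(3,4) unfolding A B rows_def cols_def ent_def by simp
qed

lemma submat_eq: assumes "M' \<preceq>\<^sub>m M" "rows M \<le> rows M'" "cols M \<le> cols M'" shows "M' = M"
proof -
  from assms(1) obtain r c where h: "wf_mat M'" "wf_mat M" "strict_mono_on {..<rows M'} r"
    "\<forall>i<rows M'. r i < rows M" "strict_mono_on {..<cols M'} c" "\<forall>j<cols M'. c j < cols M"
    "\<forall>i<rows M'. \<forall>j<cols M'. ent M' i j = ent M (r i) (c j)" unfolding submat_def by blast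
  have eq: "rows M' = rows M" "cols M' = cols M" using submat_size[OF assms(1)] assms by auto
  have "\<forall>i<rows M'. r i = i" using sm_id[OF h(3)] h(4) eq by auto
  moreover have "\<forall>j<cols M'. c j = j" using sm_id[OF h(5)] h(6) eq by auto
  ultimately show ?thesis using h eq mat_eqI[of M' M] by auto
qed

lemma submat_refl: "wf_mat M \<Longrightarrow> M \<preceq>\<^sub>m M"
  unfolding submat_def by (rule conjI, simp, rule conjI, simp, rule exI[of _ id], rule exI[of _ id])
    (auto simp: strict_mono_on_def)

lemma submat_trans: assumes "A \<preceq>\<^sub>m B" "B \<preceq>\<^sub>m C" shows "A \<preceq>\<^sub>m C"
proof -
  from assms(1) obtain r c where h: "wf_mat A" "wf_mat B" "strict_mono_on {..<rows A} r"
    "\<forall>i<rows A. r i < rows B" "strict_mono_on {..<cols A} c" "\<forall>j<cols A. c j < cols B"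
    "\<forall>i<rows A. \<forall>j<cols A. ent A i j = ent B (r i) (c j)" unfolding submat_def by blast
  from assms(2) obtain r' c' where g: "wf_mat C" "strict_mono_on {..<rows B} r'"
    "\<forall>i<rows B. r' i < rows C" "strict_mono_on {..<cols B} c'" "\<forall>j<cols B. c' j < cols C"
    "\<forall>i<rows B. \<forall>j<cols B. ent B i j = ent C (r' i) (c' j)" unfolding submat_def by blast
  have "strict_mono_on {..<rows A} (r' \<circ> r)" using h(3,4) g(2)
    unfolding strict_mono_on_def by auto
  moreover have "strict_mono_on {..<cols A} (c' \<circ> c)" using h(5,6) g(4)
    unfolding strict_mono_on_def by auto
  moreover have "\<forall>i<rows A. (r' \<circ> r) i < rows C" using h(4) g(3) by simp
  moreover have "\<forall>j<cols A. (c' \<circ> c) j < cols C" using h(6) g(5) by simp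
  moreover have "\<forall>i<rows A. \<forall>j<cols A. ent A i j = ent C ((r' \<circ> r) i) ((c' \<circ> c) j)"
    using h(4,6,7) g(6) by simp
  ultimately show ?thesis unfolding submat_def using h(1) g(1) by blast
qed

lemma minimal_exists:
  assumes "Q P" "P \<preceq>\<^sub>m P"
  shows "\<exists>M. Q M \<and> M \<preceq>\<^sub>m P \<and> (\<forall>M'. Q M' \<and> M' \<preceq>\<^sub>m M \<longrightarrow> M' = M)"
proof -
  let ?S = "{M. Q M \<and> M \<preceq>\<^sub>m P}"
  let ?f = "\<lambda>M. rows M + cols M"
  have "P \<in> ?S" using assms by simp
  then obtain M where M: "M \<in> ?S" "\<forall>N\<in>?S. ?f M \<le> ?f N"
    using ex_has_least_nat[of "\<lambda>M. M \<in> ?S" P ?f] by blast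
  show ?thesis
  proof (intro exI conjI allI impI)
    show "Q M" "M \<preceq>\<^sub>m P" using M by auto
    fix M' assume a: "Q M' \<and> M' \<preceq>\<^sub>m M"
    then have "M' \<in> ?S" using submat_trans[of M' M P] M by simp
    then have "?f M \<le> ?f M'" by (rule bspec[OF M(2)])
    moreover have "rows M' \<le> rows M \<and> cols M' \<le> cols M" using submat_size a by blast
    ultimately show "M' = M" using submat_eq a by simp
  qed
qed

lemma perm_wf: "is_perm_mat M \<Longrightarrow> wf_mat M"
  unfolding is_perm_mat_def perm_mat_def wf_mat_def rows_def cols_def ent_def by auto

lemma perm_quasi: "is_perm_mat M \<Longrightarrow> quasi_perm_mat M"
proof -
  assume "is_perm_mat M"
  then obtain n \<sigma> where s: "\<sigma> permutes {..<n}" "M = perm_mat n \<sigma>" unfolding is_perm_mat_def by blast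
  have "inj \<sigma>" using s(1) permutes_inj by blast
  then show ?thesis using perm_wf[OF \<open>is_perm_mat M\<close>] s
    unfolding quasi_perm_mat_def perm_mat_def ent_def by (auto dest: injD)
qed

lemma poly_wf: "is_polyomino M \<Longrightarrow> wf_mat M" unfolding is_polyomino_def by simp

lemma cl_in: "M \<preceq>\<^sub>m P \<Longrightarrow> P \<in> C \<Longrightarrow> M \<in> closure_plus C"
  unfolding closure_plus_def submat_def by blast

lemma cl_perm: assumes "perm_class C" "is_perm_mat P" "P \<in> closure_plus C" shows "P \<in> C"
proof -
  obtain Q where "Q \<in> C" "P \<preceq>\<^sub>m Q" using assms(3) unfolding closure_plus_def by blast
  moreover have "\<forall>M\<in>C. \<forall>M'. is_perm_mat M' \<and> M' \<preceq>\<^sub>m M \<longrightarrow> M' \<in> C"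
    using assms(1) unfolding perm_class_def by blast
  ultimately show ?thesis using assms(2) by blast
qed

lemma cl_poly: assumes "poly_class C" "is_polyomino P" "P \<in> closure_plus C" shows "P \<in> C"
proof -
  obtain Q where "Q \<in> C" "P \<preceq>\<^sub>m Q" using assms(3) unfolding closure_plus_def by blast
  moreover have "\<forall>M\<in>C. \<forall>M'. is_polyomino M' \<and> M' \<preceq>\<^sub>m M \<longrightarrow> M' \<in> C"
    using assms(1) unfolding poly_class_def by blast
  ultimately show ?thesis using assms(2) by blast
qed

theorem proposition4:
  fixes C D :: "bmat set"
  shows "(perm_class C \<longrightarrow> C = Av_S (perm_mbasis C)) \<and>
         (poly_class D \<longrightarrow> D = Av_P (poly_mbasis D))"
proof (intro conjI impI)
  assume pc: "perm_class C"
  show "C = Av_S (perm_mbasis C)"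
  proof
    show "C \<subseteq> Av_S (perm_mbasis C)"
    proof
      fix P assume P: "P \<in> C"
      have "is_perm_mat P" using pc P unfolding perm_class_def by auto
      moreover have "\<not> (M \<preceq>\<^sub>m P)" if "M \<in> perm_mbasis C" for M
        using that P cl_in unfolding perm_mbasis_def by blast
      ultimately show "P \<in> Av_S (perm_mbasis C)" unfolding Av_S_def by auto
    qed
  next
    show "Av_S (perm_mbasis C) \<subseteq> C"
    proof
      fix P assume P: "P \<in> Av_S (perm_mbasis C)"
      have pm: "is_perm_mat P" using P unfolding Av_S_def by auto
      show "P \<in> C"
      proof (rule ccontr)
        assume "P \<notin> C"
        then have ncl: "P \<notin> closure_plus C"
          using pc pm cl_perm by blast
        obtain M where M: "quasi_perm_mat M \<and> M \<notin> closure_plus C" "M \<preceq>\<^sub>m P"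
          "\<forall>M'. (quasi_perm_mat M' \<and> M' \<notin> closure_plus C) \<and> M' \<preceq>\<^sub>m M \<longrightarrow> M' = M"
          using minimal_exists[of "\<lambda>M. quasi_perm_mat M \<and> M \<notin> closure_plus C" P]
            perm_quasi[OF pm] ncl submat_refl[OF perm_wf[OF pm]] by blast
        then have "M \<in> perm_mbasis C" unfolding perm_mbasis_def by auto
        with M(2) P show False unfolding Av_S_def by auto
      qed
    qed
  qed
next
  assume pc: "poly_class D"
  show "D = Av_P (poly_mbasis D)"
  proof
    show "D \<subseteq> Av_P (poly_mbasis D)"
    proof
      fix P assume P: "P \<in> D"
      have "is_polyomino P" using pc P unfolding poly_class_def by auto
      moreover have "\<not> (M \<preceq>\<^sub>m P)" if "M \<in> poly_mbasis D" for M
        using that P cl_in unfolding poly_mbasis_def by blast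
      ultimately show "P \<in> Av_P (poly_mbasis D)" unfolding Av_P_def by auto
    qed
  next
    show "Av_P (poly_mbasis D) \<subseteq> D"
    proof
      fix P assume P: "P \<in> Av_P (poly_mbasis D)"
      have pm: "is_polyomino P" using P unfolding Av_P_def by auto
      show "P \<in> D"
      proof (rule ccontr)
        assume "P \<notin> D"
        then have ncl: "P \<notin> closure_plus D"
          using pc pm cl_poly by blast
        obtain M where M: "wf_mat M \<and> M \<notin> closure_plus D" "M \<preceq>\<^sub>m P"
          "\<forall>M'. (wf_mat M' \<and> M' \<notin> closure_plus D) \<and> M' \<preceq>\<^sub>m M \<longrightarrow> M' = M"
          using minimal_exists[of "\<lambda>M. wf_mat M \<and> M \<notin> closure_plus D" P]
            poly_wf[OF pm] ncl submat_refl[OF poly_wf[OF pm]] by blast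
        then have "M \<in> poly_mbasis D" unfolding poly_mbasis_def by auto
        with M(2) P show False unfolding Av_P_def by auto
      qed
    qed
  qed
qed

end
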